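(* In any execution of $\mathcal{U}$, suppose a process $p$ reads $(t(o), o, h(o))$ from $A$ at line 8 at time $T$ and $o$ is done at time $T$. If $p$ subsequently executes line 10 (in the same iteration), then the condition tested at line 10 is false.
   Context: Model: an asynchronous shared-memory system with possibly infinitely many processes, any of which may crash, communicating via atomic shared objects. A fetch-and-increment (F\&I) object stores an integer; F\&I$(C)$ atomically returns the current value and increments it. A generalized-compare-and-swap (GCAS) object $O$ stores a value and supports Read$(O)$ and GCAS$(c, O, v_1, v_2)$, which atomically does: if $c(\text{current value of } O, v_1)$ holds then set $O := v_2$ and return true, else return false. Tuples are compared componentwise for $=$; GCAS$(>, A, (t,-,-), v)$ succeeds iff the time field of $A$ is strictly greater than $t$. Implemented type $\mathcal{T} = (OP, RES, Q, \delta)$ with initial state $s_0$; a procedure $apply_{\mathcal{T}}(o,s)$ returns some $(s',r)$ with $(s,o,s',r)\in\delta$. $NULL$ is a value different from every response of $\mathcal{T}$, and $NOOP$ is a name different from every operation of $\mathcal{T}$. Algorithm $\mathcal{U}$: each process $p$ owns a GCAS object $H_p$ with fields $(time, response)$. Shared objects: F\&I object $C$, initially $1$; GCAS object $A$ with fields $(time, op, ptr)$, initially $(0, NOOP, h(NOOP))$, where $h(NOOP)$ is a pointer to an immutable location containing $(0,\perp)$; GCAS object $S$ with fields $(time, state, response, ptr)$, initially $(0, s_0, \perp, h(NOOP))$. Process $p$ performs operation $o$ by calling DoOp$(o)$: (1) DoOp$(o)$ invoked; (2) $t := $ F\&I$(C)$; (3) $H_p := (t, NULL)$; (4) while $H_p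 = (t, NULL)$ do: (5) $(t^*, s^*, r^*, roptr^* ) := S$; (6) GCAS$(=, *roptr^*, (t^*, NULL), (t^*, r^* ))$; (7) GCAS$(>, A, (t,-,-), (t, o, \&H_p))$; (8) $(t', o', roptr') := A$; (9) $(\hat t, \hat r) := *roptr'$; (10) if $(\hat t,\hat r) = (t', NULL)$ then (11) $(s', r') := apply_{\mathcal{T}}(o', s^* )$; (12) GCAS$(=, S, (t^*,s^*,r^*,roptr^* ), (t', s', r', roptr'))$; (13) else GCAS$(=, A, (t', o', roptr'), (t, o, \&H_p))$; end while; (14) return $H_p.response$. Notation: an "operation" $o$ means one invocation of DoOp$(o)$ (or the initial $NOOP$). $p(o)$ is the process executing it; $t(o)$ is the value returned by its F\&I at line 2, or $\infty$ if line 2 has not been executed; $h(o)$ is $H_{p(o)}$. For $NOOP$: $t(NOOP)=0$ and $h(NOOP)$ is the immutable location containing $(0,\perp)$. Operation $o$ is done at time $T$ if at some time $T'\le T$, $h(o) = (t(o), r)$ with $r \neq NULL$. *)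

theory Defs
  imports Main
begin

(* Responses stored in H_p / S: NULL, the special initial value \<bottom>, or a response of T. *)
datatype 'r resp = Null | Bot | Resp 'r

(* Pointers: h(NOOP) (immutable location holding (0,\<bottom>)) or &H_q *)
datatype 'p ptr = NoopLoc | HLoc 'p

(* Program counter: L1 = idle (next step invokes DoOp), Lk = next step executes line k *)
datatype pc = L1 | L2 | L3 | L4 | L5 | L6 | L7 | L8 | L9 | L10 | L11 | L12 | L13 | L14

record ('op,'s,'r,'p) lstate =
  pc  :: pc
  opn :: 'op
  tt  :: nat
  ts  :: nat            (* t* *)
  ss  :: 's             (* s* *)
  rs  :: "'r resp"      (* r* *)
  ps  :: "'p ptr"       (* roptr* *)
  tp  :: nat            (* t' *)
  opp :: "'op option"   (* o'  (None = NOOP) *)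
  pp  :: "'p ptr"       (* roptr' *)
  th  :: nat            (* t-hat *)
  rh  :: "'r resp"      (* r-hat *)
  sp  :: 's             (* s' *)
  rp  :: 'r             (* r' *)

record ('op,'s,'r,'p) config =
  Cv :: nat                                   (* F&I object C *)
  Av :: "nat \<times> 'op option \<times> 'p ptr"          (* A = (time, op, ptr), None = NOOP *)
  Sv :: "nat \<times> 's \<times> 'r resp \<times> 'p ptr"      (* S = (time, state, response, ptr) *)
  Hv :: "'p \<Rightarrow> nat \<times> 'r resp"                (* H_q = (time, response) *)
  loc :: "'p \<Rightarrow> ('op,'s,'r,'p) lstate"

definition deref :: "('op,'s,'r,'p) config \<Rightarrow> 'p ptr \<Rightarrow> nat \<times> 'r resp" where
  "deref c x = (case x of NoopLoc \<Rightarrow> (0, Bot) | HLoc q \<Rightarrow> Hv c q)"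

definition store :: "('op,'s,'r,'p) config \<Rightarrow> 'p ptr \<Rightarrow> nat \<times> 'r resp \<Rightarrow> ('op,'s,'r,'p) config" where
  "store c x v = (case x of NoopLoc \<Rightarrow> c | HLoc q \<Rightarrow> c\<lparr>Hv := (Hv c)(q := v)\<rparr>)"

definition setloc :: "('op,'s,'r,'p) config \<Rightarrow> 'p \<Rightarrow> ('op,'s,'r,'p) lstate \<Rightarrow> ('op,'s,'r,'p) config" where
  "setloc c p l = c\<lparr>loc := (loc c)(p := l)\<rparr>"

definition init_config :: "'s \<Rightarrow> ('op,'s,'r,'p) config \<Rightarrow> bool" where
  "init_config s0 c \<longleftrightarrow> Cv c = 1 \<and> Av c = (0, None, NoopLoc) \<and> Sv c = (0, s0, Bot, NoopLoc)
     \<and> (\<forall>q. fst (Hv c q) = 0) \<and> (\<forall>q. pc (loc c q) = L1)"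

(* One atomic step of process p of algorithm U; delta is the transition relation of T *)
definition pstep :: "('s \<times> 'op \<times> 's \<times> 'r) set \<Rightarrow> 'p \<Rightarrow> ('op,'s,'r,'p) config \<Rightarrow> ('op,'s,'r,'p) config \<Rightarrow> bool" where
  "pstep delta p c c' \<longleftrightarrow> (let l = loc c p in case pc l of
     L1 \<Rightarrow> (\<exists>x. c' = setloc c p (l\<lparr>pc := L2, opn := x\<rparr>))
   | L2 \<Rightarrow> c' = setloc (c\<lparr>Cv := Cv c + 1\<rparr>) p (l\<lparr>tt := Cv c, pc := L3\<rparr>)
   | L3 \<Rightarrow> c' = setloc (c\<lparr>Hv := (Hv c)(p := (tt l, Null))\<rparr>) p (l\<lparr>pc := L4\<rparr>)
   | L4 \<Rightarrow> c' = setloc c p (l\<lparr>pc := (if Hv c p = (tt l, Null) then L5 else L14)\<rparr>)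
   | L5 \<Rightarrow> (case Sv c of (t1, s1, r1, x1) \<Rightarrow>
             c' = setloc c p (l\<lparr>ts := t1, ss := s1, rs := r1, ps := x1, pc := L6\<rparr>))
   | L6 \<Rightarrow> c' = setloc (if deref c (ps l) = (ts l, Null) then store c (ps l) (ts l, rs l) else c)
                       p (l\<lparr>pc := L7\<rparr>)
   | L7 \<Rightarrow> c' = setloc (if fst (Av c) > tt l then c\<lparr>Av := (tt l, Some (opn l), HLoc p)\<rparr> else c)
                       p (l\<lparr>pc := L8\<rparr>)
   | L8 \<Rightarrow> (case Av c of (t1, o1, x1) \<Rightarrow>
             c' = setloc c p (l\<lparr>tp := t1, opp := o1, pp := x1, pc := L9\<rparr>))
   | L9 \<Rightarrow> (case deref c (pp l) of (t1, r1) \<Rightarrow>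
             c' = setloc c p (l\<lparr>th := t1, rh := r1, pc := L10\<rparr>))
   | L10 \<Rightarrow> c' = setloc c p (l\<lparr>pc := (if (th l, rh l) = (tp l, Null) then L11 else L13)\<rparr>)
   | L11 \<Rightarrow> (\<exists>x s1 r1. opp l = Some x \<and> (ss l, x, s1, r1) \<in> delta \<and>
             c' = setloc c p (l\<lparr>sp := s1, rp := r1, pc := L12\<rparr>))
   | L12 \<Rightarrow> c' = setloc (if Sv c = (ts l, ss l, rs l, ps l)
                        then c\<lparr>Sv := (tp l, sp l, Resp (rp l), pp l)\<rparr> else c) p (l\<lparr>pc := L4\<rparr>)
   | L13 \<Rightarrow> c' = setloc (if Av c = (tp l, opp l, pp l)
                        then c\<lparr>Av := (tt l, Some (opn l), HLoc p)\<rparr> else c) p (l\<lparr>pc := L4\<rparr>)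
   | L14 \<Rightarrow> c' = setloc c p (l\<lparr>pc := L1\<rparr>))"

(* An execution: time i is the configuration after i steps; each step is a step of some
   process (crashes = processes that stop taking steps); idle (stuttering) steps allow
   finite executions. *)
definition execution :: "('s \<times> 'op \<times> 's \<times> 'r) set \<Rightarrow> 's \<Rightarrow> (nat \<Rightarrow> ('op,'s,'r,'p) config) \<Rightarrow> bool" where
  "execution delta s0 E \<longleftrightarrow> init_config s0 (E 0) \<and>
     (\<forall>i. E (Suc i) = E i \<or> (\<exists>p. pstep delta p (E i) (E (Suc i))))"

(* Operations: the initial NOOP, or the invocation of DoOp by process q whose F&I returned t *)
datatype ('op,'p) operation = NoopOp | Inv 'p nat 'op

fun t_of :: "('op,'p) operation \<Rightarrow> nat" where
  "t_of NoopOp = 0" | "t_of (Inv q t x) = t"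
fun name_of :: "('op,'p) operation \<Rightarrow> 'op option" where
  "name_of NoopOp = None" | "name_of (Inv q t x) = Some x"
fun h_of :: "('op,'p) operation \<Rightarrow> 'p ptr" where
  "h_of NoopOp = NoopLoc" | "h_of (Inv q t x) = HLoc q"

fun is_operation :: "(nat \<Rightarrow> ('op,'s,'r,'p) config) \<Rightarrow> ('op,'p) operation \<Rightarrow> bool" where
  "is_operation E NoopOp = True"
| "is_operation E (Inv q t x) = (\<exists>i. pc (loc (E i) q) = L2 \<and> pc (loc (E (Suc i)) q) = L3
       \<and> opn (loc (E i) q) = x \<and> tt (loc (E (Suc i)) q) = t)"

definition done_at :: "(nat \<Rightarrow> ('op,'s,'r,'p) config) \<Rightarrow> ('op,'p) operation \<Rightarrow> nat \<Rightarrow> bool" where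
  "done_at E oi T \<longleftrightarrow> (\<exists>T' \<le> T. \<exists>r. deref (E T') (h_of oi) = (t_of oi, r) \<and> r \<noteq> Null)"

end

theory Submission
  imports Defs
begin

definition uinv :: "('op,'s,'r,'p) config \<Rightarrow> bool" where
 "uinv c \<longleftrightarrow> (\<forall>q. fst (Hv c q) < Cv c)
   \<and> (\<forall>q. pc (loc c q) = L3 \<longrightarrow> fst (Hv c q) < tt (loc c q) \<and> tt (loc c q) < Cv c)
   \<and> (\<forall>q. pc (loc c q) = L6 \<longrightarrow> rs (loc c q) \<noteq> Null)
   \<and> fst (snd (snd (Sv c))) \<noteq> Null"

lemma uinv_init: "init_config s0 c \<Longrightarrow> uinv c"
  unfolding init_config_def uinv_def by auto

lemma uinv_step: assumes "uinv c" "pstep delta p c c'" shows "uinv c'"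
  using assms unfolding pstep_def Let_def uinv_def
  apply (cases "pc (loc c p)")
  apply (auto simp: setloc_def store_def deref_def split: ptr.splits prod.splits if_splits)
  apply (metis less_Suc_eq)
  by (metis fst_conv)

lemma loc_other: assumes "pstep delta q c c'" "q \<noteq> p" shows "loc c' p = loc c p"
  using assms unfolding pstep_def Let_def
  by (cases "pc (loc c q)")
     (auto simp: setloc_def store_def deref_def split: ptr.splits prod.splits if_splits)

definition G :: "nat \<Rightarrow> nat \<times> 'r resp \<Rightarrow> bool" where
  "G t v \<longleftrightarrow> t < fst v \<or> (fst v = t \<and> snd v \<noteq> Null)"

lemma G_step: assumes "uinv c" "pstep delta p' c c'" "G t (Hv c q)" shows "G t (Hv c' q)"
  using assms unfolding pstep_def Let_def uinv_def G_def
  by (cases "pc (loc c p')")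
     (auto simp: setloc_def store_def deref_def split: ptr.splits prod.splits if_splits)


theorem mainTheorem9:
  fixes delta :: "('s \<times> 'op \<times> 's \<times> 'r) set" and s0 :: 's
    and E :: "nat \<Rightarrow> ('op,'s,'r,'p) config" and p :: 'p
    and oi :: "('op,'p) operation" and T k :: nat
  assumes "execution delta s0 E"
    and "is_operation E oi"
    and "pc (loc (E T) p) = L8" and "pc (loc (E (Suc T)) p) = L9"
    and "Av (E T) = (t_of oi, name_of oi, h_of oi)"
    and "done_at E oi T"
    and "T < k" and "\<forall>m. T < m \<and> m \<le> k \<longrightarrow> pc (loc (E m) p) \<in> {L9, L10}"
    and "pc (loc (E k) p) = L10" and "pc (loc (E (Suc k)) p) \<noteq> L10"
  shows "(th (loc (E k) p), rh (loc (E k) p)) \<noteq> (tp (loc (E k) p), Null)"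
proof -
  have ex: "\<And>i. E (Suc i) = E i \<or> (\<exists>q. pstep delta q (E i) (E (Suc i)))"
    using assms(1) unfolding execution_def by blast
  have invs: "\<And>i. uinv (E i)"
  proof -
    fix i show "uinv (E i)"
    proof (induction i)
      case 0
      have "init_config s0 (E 0)" using assms(1) unfolding execution_def by blast
      then show ?case by (rule uinv_init)
    next
      case (Suc i) then show ?case using ex[of i] uinv_step[of "E i"] by (cases "E (Suc i) = E i") auto
    qed
  qed
  obtain T' r where T': "T' \<le> T" "deref (E T') (h_of oi) = (t_of oi, r)" "r \<noteq> Null"
    using assms(6) unfolding done_at_def by blast
  have good: "\<And>j. T' \<le> j \<Longrightarrow> deref (E j) (h_of oi) \<noteq> (t_of oi, Null)"
  proof (cases "h_of oi")
    case NoopLoc then show "\<And>j. deref (E j) (h_of oi) \<noteq> (t_of oi, Null)" by (simp add: deref_def)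
  next
    case (HLoc q)
    have "\<And>n. G (t_of oi) (Hv (E (T' + n)) q)"
    proof -
      fix n show "G (t_of oi) (Hv (E (T' + n)) q)"
      proof (induction n)
        case 0 then show ?case using T' HLoc by (simp add: deref_def G_def)
      next
        case (Suc n) then show ?case using ex[of "T'+n"] G_step[OF invs[of "T'+n"]] by (cases "E (Suc (T'+n)) = E (T'+n)") auto
      qed
    qed
    show "\<And>j. T' \<le> j \<Longrightarrow> deref (E j) (h_of oi) \<noteq> (t_of oi, Null)"
    proof -
      fix j assume "T' \<le> j"
      then obtain n where "j = T' + n" using le_Suc_ex by blast
      then have "G (t_of oi) (Hv (E j) q)" using \<open>\<And>n. G (t_of oi) (Hv (E (T' + n)) q)\<close> by simp
      then show "deref (E j) (h_of oi) \<noteq> (t_of oi, Null)" using HLoc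
        by (cases "Hv (E j) q") (auto simp: G_def deref_def)
    qed
  qed
  have step_p: "\<And>i. loc (E (Suc i)) p \<noteq> loc (E i) p \<Longrightarrow> pstep delta p (E i) (E (Suc i))"
  proof -
    fix i assume ne: "loc (E (Suc i)) p \<noteq> loc (E i) p"
    then obtain q where q: "pstep delta q (E i) (E (Suc i))" using ex[of i] by auto
    then have "q = p" using loc_other[OF q] ne by blast
    then show "pstep delta p (E i) (E (Suc i))" using q by simp
  qed
  have s0: "tp (loc (E (Suc T)) p) = t_of oi \<and> pp (loc (E (Suc T)) p) = h_of oi"
  proof -
    have "loc (E (Suc T)) p \<noteq> loc (E T) p" using assms(3,4) by auto
    then have "pstep delta p (E T) (E (Suc T))" by (rule step_p)
    then show ?thesis using assms(3,5) unfolding pstep_def Let_def by (simp add: setloc_def)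
  qed
  have P: "\<And>n. Suc T + n \<le> k \<Longrightarrow> tp (loc (E (Suc T + n)) p) = t_of oi \<and> pp (loc (E (Suc T + n)) p) = h_of oi
      \<and> (pc (loc (E (Suc T + n)) p) = L10 \<longrightarrow> (th (loc (E (Suc T + n)) p), rh (loc (E (Suc T + n)) p)) \<noteq> (t_of oi, Null))"
  proof -
    fix n show "Suc T + n \<le> k \<Longrightarrow> tp (loc (E (Suc T + n)) p) = t_of oi \<and> pp (loc (E (Suc T + n)) p) = h_of oi
      \<and> (pc (loc (E (Suc T + n)) p) = L10 \<longrightarrow> (th (loc (E (Suc T + n)) p), rh (loc (E (Suc T + n)) p)) \<noteq> (t_of oi, Null))"
    proof (induction n)
      case 0 then show ?case using s0 assms(4) by simp
    next
      case (Suc n)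
      define m where "m = Suc T + n"
      have IH: "tp (loc (E m) p) = t_of oi \<and> pp (loc (E m) p) = h_of oi
      \<and> (pc (loc (E m) p) = L10 \<longrightarrow> (th (loc (E m) p), rh (loc (E m) p)) \<noteq> (t_of oi, Null))"
        using Suc unfolding m_def by simp
      have pcm: "pc (loc (E m) p) \<in> {L9, L10}" using assms(8) Suc.prems unfolding m_def by simp
      have pcm1: "pc (loc (E (Suc m)) p) \<in> {L9, L10}" using assms(8) Suc.prems unfolding m_def by simp
      have gm: "deref (E m) (h_of oi) \<noteq> (t_of oi, Null)" using good T' unfolding m_def by simp
      have "tp (loc (E (Suc m)) p) = t_of oi \<and> pp (loc (E (Suc m)) p) = h_of oi
      \<and> (pc (loc (E (Suc m)) p) = L10 \<longrightarrow> (th (loc (E (Suc m)) p), rh (loc (E (Suc m)) p)) \<noteq> (t_of oi, Null))"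
      proof (cases "loc (E (Suc m)) p = loc (E m) p")
        case True then show ?thesis using IH by simp
      next
        case False
        then have st: "pstep delta p (E m) (E (Suc m))" by (rule step_p)
        show ?thesis
        proof (cases "pc (loc (E m) p) = L9")
          case True
          then show ?thesis using st IH gm unfolding pstep_def Let_def
            by (auto simp: setloc_def split: prod.splits)
        next
          case False
          then have "pc (loc (E m) p) = L10" using pcm by simp
          then show ?thesis using st pcm1 unfolding pstep_def Let_def
            by (auto simp: setloc_def split: if_splits)
        qed
      qed
      then show ?case unfolding m_def by simp
    qed
  qed
  have "Suc T + (k - Suc T) = k" using assms(7) by simp
  then show ?thesis using P[of "k - Suc T"] assms(9) by simp
qed

end
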